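(* Let $(M,\circ,\mathrm{OR})$ be a free $\mathbb{D}$-module of rank 3 with scalar product and orientation, let $z_1,z_2,z_3\in M\setminus\epsilon M$, and assume $z_1,z_2$ are $\mathbb{D}$-linearly independent. Then $z_3=az_1+bz_2$ for some $a,b\in\mathbb{D}$ if and only if the axes of $z_1,z_2,z_3$ all intersect orthogonally one and the same line of $E$.
   Context: $\mathbb{D}=\{a+\epsilon b: a,b\in\mathbb{R}\}$, $\epsilon^2=0$, $\mathfrak{Re},\mathfrak{Du}$ real and dual parts. Scalar product: symmetric $\mathbb{D}$-bilinear $\circ:M\times M\to\mathbb{D}$ with $\mathfrak{Re}(x\circ x)\ge0$, equality iff $x\in\epsilon M$; orientation: one of the two classes of ordered bases under $\{b'_j=A_{jk}b_k\}\sim\{b_k\}$ iff $\det\mathfrak{Re}(A)>0$. $V=M/\epsilon M$, $\pi$ the quotient map, with inner product induced by $\mathfrak{Re}(\cdot\circ\cdot)$. $E$ is the set of real 3-dimensional subspaces $P\subset M$ with $\mathfrak{Du}(x\circ y)=0$ for $x,y\in P$ and $P\cap\epsilon M=\{0\}$; it is a Euclidean affine space over $V$: for $A,B\in E$ and a positive orthonormal basis $\{e_i\}$ of $V$, with $e_i^P\in P$ the unique lift of $e_i$, one has $e^B_i=e^A_i+\epsilon\,\epsilon_{ijk}d^ke^A_j$ and $B-A:=d^ke_k$. Axis: each $z\in M\setminus\epsilon M$ is uniquely $z=(a+\epsilon b)u$ with $a>0$, $b\in\mathbb{R}$, $u\circ u=1$; the set of $P\in E$ with $u\in P$ is a line of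 $E$ with direction $\pi(u)$, called the axis of $z$. *)

theory Defs
  imports "HOL-Analysis.Analysis"
begin

text \<open>Dual numbers a + eps b are represented as pairs (a, b) of reals;
  fst is the real part, snd the dual part; addition is componentwise.\<close>
type_synonym dual = "real \<times> real"

definition dmul :: "dual \<Rightarrow> dual \<Rightarrow> dual" where
  "dmul p q = (fst p * fst q, fst p * snd q + snd p * fst q)"

text \<open>A free D-module of rank 3 is modelled (via a fixed basis) as D^3, written as
  pairs (x, y) of vectors in real^3 meaning x + eps y.\<close>
type_synonym dmod = "(real^3) \<times> (real^3)"

definition smul :: "dual \<Rightarrow> dmod \<Rightarrow> dmod" where
  "smul c m = (fst c *\<^sub>R fst m, fst c *\<^sub>R snd m + snd c *\<^sub>R fst m)"

definition epsM :: "dmod set" where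
  "epsM = range (smul (0, 1))"

definition scalar_product :: "(dmod \<Rightarrow> dmod \<Rightarrow> dual) \<Rightarrow> bool" where
  "scalar_product g \<longleftrightarrow>
     (\<forall>x y. g x y = g y x) \<and>
     (\<forall>x y z. g (x + y) z = g x z + g y z) \<and>
     (\<forall>c x y. g (smul c x) y = dmul c (g x y)) \<and>
     (\<forall>x. 0 \<le> fst (g x x) \<and> (fst (g x x) = 0 \<longleftrightarrow> x \<in> epsM))"

definition dbasis :: "(3 \<Rightarrow> dmod) \<Rightarrow> bool" where
  "dbasis b \<longleftrightarrow> (\<forall>m. \<exists>!c :: 3 \<Rightarrow> dual. m = (\<Sum>k\<in>UNIV. smul (c k) (b k)))"

definition oequiv :: "(3 \<Rightarrow> dmod) \<Rightarrow> (3 \<Rightarrow> dmod) \<Rightarrow> bool" where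
  "oequiv b' b \<longleftrightarrow> (\<exists>A :: 3 \<Rightarrow> 3 \<Rightarrow> dual.
      (\<forall>j. b' j = (\<Sum>k\<in>UNIV. smul (A j k) (b k))) \<and>
      det (\<chi> j k. fst (A j k)) > 0)"

definition orientation :: "(3 \<Rightarrow> dmod) set \<Rightarrow> bool" where
  "orientation OR \<longleftrightarrow> (\<exists>b. dbasis b \<and> OR = {b'. dbasis b' \<and> oequiv b' b})"

text \<open>V = M / eps M is identified with real^3 via the quotient map pi = fst;
  its inner product is induced by the real part of g.\<close>
definition vin :: "(dmod \<Rightarrow> dmod \<Rightarrow> dual) \<Rightarrow> real^3 \<Rightarrow> real^3 \<Rightarrow> real" where
  "vin g v w = fst (g (v, 0) (w, 0))"

definition pos_onb :: "(dmod \<Rightarrow> dmod \<Rightarrow> dual) \<Rightarrow> (3 \<Rightarrow> dmod) set \<Rightarrow> (3 \<Rightarrow> real^3) \<Rightarrow> bool" where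
  "pos_onb g OR e \<longleftrightarrow>
     (\<forall>i j. vin g (e i) (e j) = (if i = j then 1 else 0)) \<and> (\<lambda>i. (e i, 0)) \<in> OR"

definition inE :: "(dmod \<Rightarrow> dmod \<Rightarrow> dual) \<Rightarrow> dmod set \<Rightarrow> bool" where
  "inE g P \<longleftrightarrow> subspace P \<and> dim P = 3 \<and>
     (\<forall>x\<in>P. \<forall>y\<in>P. snd (g x y) = 0) \<and> P \<inter> epsM = {0}"

definition lift :: "dmod set \<Rightarrow> real^3 \<Rightarrow> dmod" where
  "lift P v = (THE x. x \<in> P \<and> fst x = v)"

definition levi :: "3 \<Rightarrow> 3 \<Rightarrow> 3 \<Rightarrow> real" where
  "levi i j k = det (\<chi> r :: 3. if r = 0 then axis i (1::real) else if r = 1 then axis j 1 else axis k 1)"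

text \<open>Affine structure on E: translates g OR A v B means B - A = v.\<close>
definition translates :: "(dmod \<Rightarrow> dmod \<Rightarrow> dual) \<Rightarrow> (3 \<Rightarrow> dmod) set \<Rightarrow> dmod set \<Rightarrow> real^3 \<Rightarrow> dmod set \<Rightarrow> bool" where
  "translates g OR A v B \<longleftrightarrow> inE g A \<and> inE g B \<and>
     (\<forall>e. pos_onb g OR e \<longrightarrow>
        (\<forall>i. lift B (e i) = lift A (e i) +
             smul (0, 1) (\<Sum>j\<in>UNIV. \<Sum>k\<in>UNIV. (levi i j k * vin g v (e k)) *\<^sub>R lift A (e j))))"

definition line_dir :: "(dmod \<Rightarrow> dmod \<Rightarrow> dual) \<Rightarrow> (3 \<Rightarrow> dmod) set \<Rightarrow> dmod set set \<Rightarrow> real^3 \<Rightarrow> bool" where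
  "line_dir g OR L d \<longleftrightarrow> d \<noteq> 0 \<and>
     (\<exists>A. inE g A \<and> L = {B. \<exists>t::real. translates g OR A (t *\<^sub>R d) B})"

definition is_line :: "(dmod \<Rightarrow> dmod \<Rightarrow> dual) \<Rightarrow> (3 \<Rightarrow> dmod) set \<Rightarrow> dmod set set \<Rightarrow> bool" where
  "is_line g OR L \<longleftrightarrow> (\<exists>d. line_dir g OR L d)"

definition meet_orth :: "(dmod \<Rightarrow> dmod \<Rightarrow> dual) \<Rightarrow> (3 \<Rightarrow> dmod) set \<Rightarrow> dmod set set \<Rightarrow> dmod set set \<Rightarrow> bool" where
  "meet_orth g OR L1 L2 \<longleftrightarrow> is_line g OR L1 \<and> is_line g OR L2 \<and> L1 \<inter> L2 \<noteq> {} \<and>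
     (\<forall>d1 d2. line_dir g OR L1 d1 \<and> line_dir g OR L2 d2 \<longrightarrow> vin g d1 d2 = 0)"

definition unitpart :: "(dmod \<Rightarrow> dmod \<Rightarrow> dual) \<Rightarrow> dmod \<Rightarrow> dmod" where
  "unitpart g z = (THE u. g u u = (1, 0) \<and> (\<exists>a b. a > 0 \<and> z = smul (a, b) u))"

definition axis_of :: "(dmod \<Rightarrow> dmod \<Rightarrow> dual) \<Rightarrow> dmod \<Rightarrow> dmod set set" where
  "axis_of g z = {P. inE g P \<and> unitpart g z \<in> P}"

end

theory Submission
  imports Defs
begin
unbundle cross3_syntax

lemma smul_simps[simp]: "smul c (a, b) = (fst c *\<^sub>R a, fst c *\<^sub>R b + snd c *\<^sub>R a)"
  by (simp add: smul_def)

lemma dmul_simps[simp]: "dmul c d = (fst c * fst d, fst c * snd d + snd c * fst d)"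
  by (simp add: dmul_def)

lemma epsM_iff: "x \<in> epsM \<longleftrightarrow> fst x = 0"
proof
  assume "x \<in> epsM" then show "fst x = 0" by (auto simp: epsM_def smul_def)
next
  assume "fst x = 0"
  then have "x = smul (0,1) (snd x, 0)" by (cases x) (auto simp: smul_def)
  then show "x \<in> epsM" unfolding epsM_def by blast
qed

locale sp =
  fixes g :: "dmod \<Rightarrow> dmod \<Rightarrow> dual"
  assumes SP: "scalar_product g"
begin

lemma g_sym: "g x y = g y x" using SP unfolding scalar_product_def by blast
lemma g_add1: "g (x + y) z = g x z + g y z" using SP unfolding scalar_product_def by blast
lemma g_smul1: "g (smul c x) y = dmul c (g x y)" using SP unfolding scalar_product_def by blast
lemma g_pos: "0 \<le> fst (g x x)" and g_zero_iff: "fst (g x x) = 0 \<longleftrightarrow> x \<in> epsM"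
  using SP unfolding scalar_product_def by blast+

lemma g_add2: "g z (x + y) = g z x + g z y" by (metis g_sym g_add1)

lemma g_scaleR1: "g (c *\<^sub>R x) y = c *\<^sub>R g x y"
proof -
  have "c *\<^sub>R x = smul (c, 0) x" by (cases x) (simp add: scaleR_prod_def)
  then show ?thesis by (simp add: g_smul1 scaleR_prod_def)
qed

lemma g_scaleR2: "g y (c *\<^sub>R x) = c *\<^sub>R g y x" by (metis g_sym g_scaleR1)

lemma g_zero1[simp]: "g 0 y = 0" using g_scaleR1[of 0 0 y] by simp
lemma g_zero2[simp]: "g y 0 = 0" using g_scaleR2[of y 0 0] by simp

lemma g_sum1: "g (\<Sum>i\<in>I. f i) y = (\<Sum>i\<in>I. g (f i) y)"
  by (induction I rule: infinite_finite_induct) (auto simp: g_add1)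
lemma g_sum2: "g y (\<Sum>i\<in>I. f i) = (\<Sum>i\<in>I. g y (f i))"
  by (induction I rule: infinite_finite_induct) (auto simp: g_add2)

definition G :: "real^3 \<Rightarrow> real^3 \<Rightarrow> real" where "G v w = fst (g (v, 0) (w, 0))"
definition H :: "real^3 \<Rightarrow> real^3 \<Rightarrow> real" where "H v w = snd (g (v, 0) (w, 0))"

lemma vin_G: "vin g = G" by (auto simp: vin_def G_def fun_eq_iff)

lemma g_decomp: "g x y = (G (fst x) (fst y), H (fst x) (fst y) + G (snd x) (fst y) + G (fst x) (snd y))"
proof -
  have dx: "x = (fst x, 0) + smul (0,1) (snd x, 0)" for x :: dmod by (cases x) simp
  have gl: "g x y = g (fst x, 0) y + dmul (0,1) (g (snd x, 0) y)" for x y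
  proof -
    have "g x y = g ((fst x, 0) + smul (0,1) (snd x, 0)) y" using dx[of x] by metis
    then show ?thesis by (simp only: g_add1 g_smul1)
  qed
  have gr: "g x y = g x (fst y, 0) + dmul (0,1) (g x (snd y, 0))" for x y
    using gl[of y x] by (metis g_sym)
  show ?thesis
    apply (subst gl)
    apply (subst gr[of "(fst x, 0)"])
    apply (subst gr[of "(snd x, 0)"])
    apply (simp add: G_def H_def prod_eq_iff)
    done
qed

lemma G_sym: "G v w = G w v" by (simp add: G_def g_sym)
lemma H_sym: "H v w = H w v" by (simp add: H_def g_sym)
lemma G_add1: "G (u + v) w = G u w + G v w" using g_add1[of "(u,0)" "(v,0)" "(w,0)"] by (simp add: G_def)
lemma G_add2: "G w (u + v) = G w u + G w v" by (metis G_sym G_add1)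
lemma G_scale1: "G (c *\<^sub>R u) w = c * G u w"
  using g_scaleR1[of c "(u,0)" "(w,0)"] by (simp add: G_def)
lemma G_scale2: "G w (c *\<^sub>R u) = c * G w u" by (metis G_sym G_scale1)
lemma H_add1: "H (u + v) w = H u w + H v w" using g_add1[of "(u,0)" "(v,0)" "(w,0)"] by (simp add: H_def)
lemma H_add2: "H w (u + v) = H w u + H w v" by (metis H_sym H_add1)
lemma H_scale1: "H (c *\<^sub>R u) w = c * H u w"
  using g_scaleR1[of c "(u,0)" "(w,0)"] by (simp add: H_def)
lemma H_scale2: "H w (c *\<^sub>R u) = c * H w u" by (metis H_sym H_scale1)

lemma G_linear1: "linear (\<lambda>u. G u w)"
  by (rule linearI) (simp_all add: G_add1 G_scale1)
lemma G_linear2: "linear (\<lambda>u. G w u)"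
  by (rule linearI) (simp_all add: G_add2 G_scale2)
lemma H_linear2: "linear (\<lambda>u. H w u)"
  by (rule linearI) (simp_all add: H_add2 H_scale2)

lemma G_sum1: "G (\<Sum>i\<in>I. f i) w = (\<Sum>i\<in>I. G (f i) w)"
  using linear_sum[OF G_linear1] by blast
lemma G_sum2: "G w (\<Sum>i\<in>I. f i) = (\<Sum>i\<in>I. G w (f i))"
  using linear_sum[OF G_linear2] by blast
lemma H_sum2: "H w (\<Sum>i\<in>I. f i) = (\<Sum>i\<in>I. H w (f i))"
  using linear_sum[OF H_linear2] by blast

lemma G_pos: "v \<noteq> 0 \<Longrightarrow> G v v > 0"
  using g_pos[of "(v,0)"] g_zero_iff[of "(v,0)"] by (auto simp: G_def epsM_iff)

lemma G_zero1[simp]: "G 0 w = 0" using G_scale1[of 0 0 w] by simp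
lemma G_zero2[simp]: "G w 0 = 0" using G_scale2[of w 0 0] by simp
lemma G_neg1: "G (- u) w = - G u w" using G_scale1[of "-1" u w] by simp
lemma G_diff1: "G (u - v) w = G u w - G v w" by (metis G_add1 G_neg1 diff_conv_add_uminus)
lemma G_diff2: "G w (u - v) = G w u - G w v" by (metis G_sym G_diff1)

end

context sp begin

definition onb :: "(3 \<Rightarrow> real^3) \<Rightarrow> bool" where
  "onb e \<longleftrightarrow> (\<forall>i j. G (e i) (e j) = (if i = j then 1 else 0))"

lemma onb_expand:
  assumes "onb e" shows "v = (\<Sum>k\<in>UNIV. G v (e k) *\<^sub>R e k)"
proof -
  define f where "f c = (\<Sum>k\<in>UNIV. (c $ k) *\<^sub>R e k)" for c :: "real^3"
  have lin: "linear f" unfolding f_def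
    by (rule linearI) (simp_all add: algebra_simps sum.distrib scaleR_sum_right)
  have Gf: "G (f c) (e j) = c $ j" for c j
  proof -
    have "G (f c) (e j) = (\<Sum>k\<in>UNIV. if k = j then c $ k else 0)"
      unfolding f_def G_sum1 G_scale1
      by (rule sum.cong) (use assms in \<open>auto simp: onb_def\<close>)
    then show ?thesis by simp
  qed
  have "inj f"
  proof (rule injI)
    fix a b assume "f a = f b"
    then have "a $ j = b $ j" for j by (metis Gf)
    then show "a = b" by (simp add: vec_eq_iff)
  qed
  then have "surj f" using lin linear_injective_imp_surjective by blast
  then obtain c where c: "v = f c" by blast
  show ?thesis unfolding c by (simp add: Gf) (simp add: f_def)
qed

lemma onb_G: assumes "onb e" shows "G x y = (\<Sum>k\<in>UNIV. G x (e k) * G y (e k))"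
proof -
  have "G x y = G x (\<Sum>k\<in>UNIV. G y (e k) *\<^sub>R e k)" using onb_expand[OF assms, of y] by simp
  also have "\<dots> = (\<Sum>k\<in>UNIV. G x (e k) * G y (e k))" by (simp add: G_sum2 G_scale2 mult.commute)
  finally show ?thesis .
qed

definition nv :: "real^3 \<Rightarrow> real^3" where "nv v = (1 / sqrt (G v v)) *\<^sub>R v"

lemma nv_unit: "v \<noteq> 0 \<Longrightarrow> G (nv v) (nv v) = 1"
  using G_pos[of v] by (simp add: nv_def G_scale1 G_scale2 field_simps)

lemma onb_exists: "\<exists>e. onb e"
proof -
  define a1 a2 a3 where "a1 = (axis 1 1 :: real^3)" and "a2 = (axis 2 1 :: real^3)" and "a3 = (axis 3 1 :: real^3)"
  define f1 where "f1 = nv a1"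
  define v2 where "v2 = a2 - G a2 f1 *\<^sub>R f1"
  define f2 where "f2 = nv v2"
  define v3 where "v3 = a3 - G a3 f1 *\<^sub>R f1 - G a3 f2 *\<^sub>R f2"
  define f3 where "f3 = nv v3"
  have a1: "a1 \<noteq> 0" by (simp add: a1_def)
  have f1_2: "f1 $ 2 = 0" "f1 $ 3 = 0" by (simp_all add: f1_def nv_def a1_def axis_def)
  have "v2 $ 2 = 1" by (simp add: v2_def f1_2 a2_def axis_def)
  then have v2: "v2 \<noteq> 0" by auto
  have f2_3: "f2 $ 3 = 0" by (simp add: f2_def nv_def v2_def f1_2 a2_def axis_def)
  have "v3 $ 3 = 1" by (simp add: v3_def f1_2 f2_3 a3_def axis_def)
  then have v3: "v3 \<noteq> 0" by auto
  have n1: "G f1 f1 = 1" using nv_unit[OF a1] by (simp add: f1_def)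
  have n2: "G f2 f2 = 1" using nv_unit[OF v2] by (simp add: f2_def)
  have n3: "G f3 f3 = 1" using nv_unit[OF v3] by (simp add: f3_def)
  have o12: "G f1 f2 = 0"
    by (simp add: f2_def nv_def G_scale2 v2_def G_diff2 n1 G_sym[of a2])
  have o13: "G f1 f3 = 0"
    by (simp add: f3_def nv_def G_scale2 v3_def G_diff2 n1 o12 G_sym[of a3])
  have o23: "G f2 f3 = 0"
    by (simp add: f3_def nv_def G_scale2 v3_def G_diff2 n2 o12[unfolded G_sym[of f1]] G_sym[of a3])
  define e where "e i = (if i = 1 then f1 else if i = 2 then f2 else f3)" for i :: 3
  have "onb e"
    unfolding onb_def
  proof (intro allI)
    fix i j :: 3
    show "G (e i) (e j) = (if i = j then 1 else 0)"
      using exhaust_3[of i] exhaust_3[of j]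
      by (auto simp: e_def n1 n2 n3 o12 o13 o23 G_sym[of f2 f1] G_sym[of f3 f1] G_sym[of f3 f2])
  qed
  then show ?thesis by blast
qed

end

definition Fm :: "(3 \<Rightarrow> dmod) \<Rightarrow> real^3^3" where "Fm b = (\<chi> j. fst (b j))"

lemma fst_sum_smul: "fst (\<Sum>k\<in>UNIV. smul (c k) (b k)) = (\<Sum>k\<in>UNIV. fst (c k) *\<^sub>R fst (b k))"
  by (simp add: fst_sum smul_def)
lemma snd_sum_smul: "snd (\<Sum>k\<in>UNIV. smul (c k) (b k)) = (\<Sum>k\<in>UNIV. fst (c k) *\<^sub>R snd (b k) + snd (c k) *\<^sub>R fst (b k))"
  by (simp add: snd_sum smul_def)

lemma Fm_rel:
  assumes "\<forall>j. b' j = (\<Sum>k\<in>UNIV. smul (A j k) (b k))"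
  shows "Fm b' = (\<chi> j k. fst (A j k)) ** Fm b"
  using assms by (simp add: Fm_def vec_eq_iff matrix_matrix_mult_def fst_sum_smul sum_component)

lemma dbasis_det: assumes "dbasis b" shows "det (Fm b) \<noteq> 0"
proof -
  have "surj (\<lambda>x. transpose (Fm b) *v x)"
  proof (rule surjI[where f = "\<lambda>v. \<chi> k. fst ((SOME c. (v, 0) = (\<Sum>k\<in>UNIV. smul (c k) (b k))) k)"])
    fix v :: "real^3"
    have "\<exists>c. (v, 0) = (\<Sum>k\<in>UNIV. smul (c k) (b k))" using assms unfolding dbasis_def by blast
    then have c: "(v, 0) = (\<Sum>k\<in>UNIV. smul ((SOME c. (v, 0) = (\<Sum>k\<in>UNIV. smul (c k) (b k))) k) (b k))"
      by (rule someI_ex)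
    define c where "c = (SOME c. (v, 0) = (\<Sum>k\<in>UNIV. smul (c k) (b k)))"
    have "v = (\<Sum>k\<in>UNIV. fst (c k) *\<^sub>R fst (b k))"
      using arg_cong[OF c[folded c_def], of fst] by (simp add: fst_sum_smul)
    then show "transpose (Fm b) *v (\<chi> k. fst (c k)) = v"
      by (simp add: vec_eq_iff matrix_vector_mult_def transpose_def Fm_def sum_component mult.commute)
  qed
  then have "invertible (transpose (Fm b))"
    using matrix_right_invertible_surjective invertible_right_inverse by blast
  then show ?thesis by (simp add: invertible_det_nz)
qed

lemma oequiv_iff:
  assumes b: "dbasis b" and b': "dbasis b'"
  shows "oequiv b' b \<longleftrightarrow> det (Fm b') * det (Fm b) > 0"
proof
  assume "oequiv b' b"
  then obtain A where A: "\<forall>j. b' j = (\<Sum>k\<in>UNIV. smul (A j k) (b k))" "det (\<chi> j k. fst (A j k)) > 0"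
    unfolding oequiv_def by blast
  have "det (Fm b') = det (\<chi> j k. fst (A j k)) * det (Fm b)"
    using Fm_rel[OF A(1)] by (simp add: det_mul)
  moreover have "det (Fm b) * det (Fm b) > 0" using dbasis_det[OF b] by (auto simp: zero_less_mult_iff linorder_neq_iff)
  ultimately show "det (Fm b') * det (Fm b) > 0" using A(2)
    by (metis mult.assoc zero_less_mult_iff)
next
  assume pos: "det (Fm b') * det (Fm b) > 0"
  have "\<forall>j. \<exists>c. b' j = (\<Sum>k\<in>UNIV. smul (c k) (b k))" using b unfolding dbasis_def by blast
  then obtain A where A: "\<forall>j. b' j = (\<Sum>k\<in>UNIV. smul (A j k) (b k))" by metis
  have "det (Fm b') = det (\<chi> j k. fst (A j k)) * det (Fm b)"
    using Fm_rel[OF A] by (simp add: det_mul)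
  with pos have "det (\<chi> j k. fst (A j k)) * (det (Fm b) * det (Fm b)) > 0"
    by (simp add: mult.assoc)
  moreover have "det (Fm b) * det (Fm b) > 0" using dbasis_det[OF b] by (auto simp: zero_less_mult_iff linorder_neq_iff)
  ultimately have "det (\<chi> j k. fst (A j k)) > 0" using zero_less_mult_pos2 by blast
  then show "oequiv b' b" using A unfolding oequiv_def by blast
qed

lemma orientation_char:
  assumes "orientation OR"
  shows "\<exists>b. dbasis b \<and> (\<forall>b'. b' \<in> OR \<longleftrightarrow> dbasis b' \<and> det (Fm b') * det (Fm b) > 0)"
proof -
  obtain b where b: "dbasis b" "OR = {b'. dbasis b' \<and> oequiv b' b}"
    using assms unfolding orientation_def by blast
  then show ?thesis using oequiv_iff by blast
qed

context sp begin

lemma onb_dbasis: assumes "onb e" shows "dbasis (\<lambda>i. (e i, 0))"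
  unfolding dbasis_def
proof
  fix m :: dmod
  have sp: "(\<Sum>k\<in>UNIV. smul (c k) (e k, 0)) = ((\<Sum>k\<in>UNIV. fst (c k) *\<^sub>R e k), (\<Sum>k\<in>UNIV. snd (c k) *\<^sub>R e k))" for c
    by (simp add: prod_eq_iff fst_sum snd_sum)
  show "\<exists>!c. m = (\<Sum>k\<in>UNIV. smul (c k) (e k, 0))"
  proof
    show "m = (\<Sum>k\<in>UNIV. smul ((\<lambda>k. (G (fst m) (e k), G (snd m) (e k))) k) (e k, 0))"
      unfolding sp using onb_expand[OF assms, of "fst m"] onb_expand[OF assms, of "snd m"]
      by (simp add: prod_eq_iff)
  next
    fix c assume "m = (\<Sum>k\<in>UNIV. smul (c k) (e k, 0))"
    then have m: "fst m = (\<Sum>k\<in>UNIV. fst (c k) *\<^sub>R e k)" "snd m = (\<Sum>k\<in>UNIV. snd (c k) *\<^sub>R e k)"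
      unfolding sp by auto
    have coef: "G (\<Sum>k\<in>UNIV. a k *\<^sub>R e k) (e j) = a j" for a j
    proof -
      have "G (\<Sum>k\<in>UNIV. a k *\<^sub>R e k) (e j) = (\<Sum>k\<in>UNIV. if k = j then a k else 0)"
        unfolding G_sum1 G_scale1
        by (rule sum.cong) (use assms in \<open>auto simp: onb_def\<close>)
      then show ?thesis by simp
    qed
    show "c = (\<lambda>k. (G (fst m) (e k), G (snd m) (e k)))"
      using coef by (simp add: m fun_eq_iff prod_eq_iff)
  qed
qed

lemma Fm_real: "Fm (\<lambda>i. (e i, 0)) = (\<chi> i. e i)" by (simp add: Fm_def)

end

locale spo = sp +
  fixes OR :: "(3 \<Rightarrow> dmod) set"
  assumes ORI: "orientation OR"
begin

lemma pos_onb_iff: "pos_onb g OR e \<longleftrightarrow> onb e \<and> (\<lambda>i. (e i, 0)) \<in> OR"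
  by (simp add: pos_onb_def onb_def vin_G)

lemma pos_onb_exists: "\<exists>e. pos_onb g OR e"
proof -
  obtain b where b: "dbasis b" and OR: "\<And>b'. b' \<in> OR \<longleftrightarrow> dbasis b' \<and> det (Fm b') * det (Fm b) > 0"
    using orientation_char[OF ORI] by blast
  obtain e where e: "onb e" using onb_exists by blast
  define e' where "e' = e(1 := - e 1)"
  have e': "onb e'"
    using e unfolding onb_def e'_def
    by (auto simp: G_neg1 G_sym[of _ "- _"])
  have d: "det (\<chi> i. e' i) = - det (\<chi> i. e i)"
    by (simp add: e'_def det_3)
  have nz: "det (\<chi> i. e i) \<noteq> 0" using dbasis_det[OF onb_dbasis[OF e]] by (simp add: Fm_real)
  have nzb: "det (Fm b) \<noteq> 0" using dbasis_det[OF b] .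
  show ?thesis
  proof (cases "det (\<chi> i. e i) * det (Fm b) > 0")
    case True
    then show ?thesis using OR onb_dbasis[OF e] e by (auto simp: pos_onb_iff Fm_real)
  next
    case False
    then have "det (\<chi> i. e i) * det (Fm b) < 0" using nz nzb by (simp add: linorder_not_less le_less)
    then have "det (\<chi> i. e' i) * det (Fm b) > 0" using d by simp
    then show ?thesis using OR onb_dbasis[OF e'] e' by (auto simp: pos_onb_iff Fm_real)
  qed
qed

end

lemma levi_vals:
  "levi 1 2 3 = 1" "levi 2 3 1 = 1" "levi 3 1 2 = 1"
  "levi 1 3 2 = -1" "levi 3 2 1 = -1" "levi 2 1 3 = -1"
  "levi i i k = 0" "levi i j i = 0" "levi i j j = 0"
  by (simp_all add: levi_def det_3 axis_def)

lemma levi_all: "levi i j k = (if (i,j,k) = (1,2,3) \<or> (i,j,k) = (2,3,1) \<or> (i,j,k) = (3,1,2) then 1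
   else if (i,j,k) = (1,3,2) \<or> (i,j,k) = (3,2,1) \<or> (i,j,k) = (2,1,3) then -1 else 0)"
  using exhaust_3[of i] exhaust_3[of j] exhaust_3[of k]
  by (auto simp: levi_vals)

lemma cross_axis_levi:
  "c \<times> axis i 1 = (\<Sum>j\<in>UNIV. \<Sum>k\<in>UNIV. (levi i j k * c $ k) *\<^sub>R axis j (1::real))"
  using exhaust_3[of i]
  by (auto simp: levi_all sum_3 cross3_def vec_eq_iff forall_3 axis_def vector_def)

lemma rot_levi:
  fixes f :: "3 \<Rightarrow> real^3"
  assumes on: "\<And>i j. f i \<bullet> f j = (if i = j then 1 else 0)" and d: "det (\<chi> i. f i) = 1"
  shows "c \<times> f i = (\<Sum>j\<in>UNIV. \<Sum>k\<in>UNIV. (levi i j k * (c \<bullet> f k)) *\<^sub>R f j)"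
proof -
  define F :: "real^3^3" where "F = (\<chi> i. f i)"
  define Q where "Q = transpose F"
  have FF: "F ** transpose F = mat 1"
    using on by (simp add: F_def vec_eq_iff matrix_matrix_mult_def transpose_def mat_def inner_vec_def)
  then have "orthogonal_matrix F"
    using matrix_left_right_inverse orthogonal_matrix_def by blast
  then have rot: "rotation_matrix Q" using d by (simp add: Q_def rotation_matrix_def F_def)
  have QF: "Q ** F = mat 1" using FF matrix_left_right_inverse Q_def by blast
  have Qa: "Q *v axis j 1 = f j" for j
    by (simp add: Q_def F_def vec_eq_iff matrix_vector_mult_def transpose_def axis_def
        if_distrib cong: if_cong)
  define c' where "c' = F *v c"
  have cc: "c = Q *v c'" by (simp add: c'_def matrix_vector_mul_assoc QF)
  have c'k: "c' $ k = c \<bullet> f k" for k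
    by (simp add: c'_def F_def matrix_vector_mult_def inner_vec_def mult.commute)
  have "c \<times> f i = (Q *v c') \<times> (Q *v axis i 1)" by (simp add: cc Qa)
  also have "\<dots> = Q *v (c' \<times> axis i 1)" using cross_rotation_matrix[OF rot] by simp
  also have "\<dots> = Q *v (\<Sum>j\<in>UNIV. \<Sum>k\<in>UNIV. (levi i j k * c' $ k) *\<^sub>R axis j (1::real))"
    by (simp add: cross_axis_levi)
  also have "\<dots> = (\<Sum>j\<in>UNIV. \<Sum>k\<in>UNIV. (levi i j k * c' $ k) *\<^sub>R (Q *v axis j 1))"
    by (simp add: linear_sum[OF matrix_vector_mul_linear] matrix_vector_mult_scaleR)
  finally show ?thesis by (simp add: Qa c'k)
qed


definition gs :: "dmod \<Rightarrow> dmod \<Rightarrow> dual" where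
  "gs a b = (fst a \<bullet> fst b, fst a \<bullet> snd b + snd a \<bullet> fst b)"

locale spe = spo +
  fixes e0 :: "3 \<Rightarrow> real^3"
  assumes E0: "pos_onb g OR e0"
begin

lemma onb0: "onb e0" using E0 pos_onb_iff by blast

definition Phi :: "real^3 \<Rightarrow> real^3" where "Phi x = (\<chi> i. G x (e0 i))"
definition Psi :: "real^3 \<Rightarrow> real^3" where "Psi c = (\<Sum>i\<in>UNIV. c $ i *\<^sub>R e0 i)"
definition hv :: "real^3 \<Rightarrow> real^3" where "hv x = (\<chi> i. H x (e0 i) / 2)"

lemma Psi_Phi[simp]: "Psi (Phi x) = x"
  using onb_expand[OF onb0, of x] by (simp add: Psi_def Phi_def)

lemma coef0: "G (\<Sum>k\<in>UNIV. a k *\<^sub>R e0 k) (e0 j) = a j"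
proof -
  have "G (\<Sum>k\<in>UNIV. a k *\<^sub>R e0 k) (e0 j) = (\<Sum>k\<in>UNIV. if k = j then a k else 0)"
    unfolding G_sum1 G_scale1
    by (rule sum.cong) (use onb0 in \<open>auto simp: onb_def\<close>)
  then show ?thesis by simp
qed

lemma Phi_Psi[simp]: "Phi (Psi c) = c"
  by (simp add: Phi_def Psi_def coef0 vec_eq_iff)

lemma G_Phi: "G x y = Phi x \<bullet> Phi y"
  using onb_G[OF onb0, of x y] by (simp add: Phi_def inner_vec_def)

lemma Phi_linear: "linear Phi"
  by (rule linearI) (simp_all add: Phi_def vec_eq_iff G_add1 G_scale1)
lemma hv_linear: "linear hv"
  by (rule linearI) (simp_all add: hv_def vec_eq_iff H_add1 H_scale1 add_divide_distrib)

lemmas Phi_add = linear_add[OF Phi_linear]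
lemmas Phi_scale = linear_scale[OF Phi_linear]
lemmas Phi_diff = linear_diff[OF Phi_linear]
lemmas Phi_0 = linear_0[OF Phi_linear]
lemmas hv_add = linear_add[OF hv_linear]
lemmas hv_scale = linear_scale[OF hv_linear]

lemma Phi_inj: "Phi x = Phi y \<longleftrightarrow> x = y" by (metis Psi_Phi)
lemma Phi_eq0: "Phi x = 0 \<longleftrightarrow> x = 0" by (metis Phi_0 Phi_inj)

lemma Psi_inj: "Psi x = Psi y \<longleftrightarrow> x = y" by (metis Phi_Psi)

definition Rm :: "dmod \<Rightarrow> dmod" where "Rm x = (Phi (fst x), Phi (snd x) + hv (fst x))"
definition Ri :: "dmod \<Rightarrow> dmod" where "Ri p = (Psi (fst p), Psi (snd p - hv (Psi (fst p))))"

lemma Rm_Ri[simp]: "Rm (Ri p) = p" by (simp add: Rm_def Ri_def)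
lemma Ri_Rm[simp]: "Ri (Rm x) = x" by (simp add: Rm_def Ri_def)
lemma Rm_inj: "Rm x = Rm y \<longleftrightarrow> x = y" by (metis Ri_Rm)

lemma Rm_add: "Rm (x + y) = Rm x + Rm y"
  by (simp add: Rm_def Phi_add hv_add)
lemma Rm_smul: "Rm (smul c x) = smul c (Rm x)"
  by (simp add: Rm_def smul_def Phi_add hv_add Phi_scale hv_scale algebra_simps)
lemma Rm_scaleR: "Rm (c *\<^sub>R x) = c *\<^sub>R Rm x"
  by (simp add: Rm_def Phi_scale hv_scale scaleR_add_right)
lemma Rm_linear: "linear Rm"
  by (rule linearI) (simp_all add: Rm_add Rm_scaleR)
lemma Rm_0[simp]: "Rm 0 = 0" using linear_0[OF Rm_linear] .
lemma Rm_sum: "Rm (\<Sum>i\<in>I. f i) = (\<Sum>i\<in>I. Rm (f i))" using linear_sum[OF Rm_linear] .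
lemma fst_Rm: "fst (Rm x) = Phi (fst x)" by (simp add: Rm_def)

lemma Phi_hv: "Phi x \<bullet> hv y = H y x / 2"
proof -
  have "Phi x \<bullet> hv y = (\<Sum>i\<in>UNIV. G x (e0 i) * H y (e0 i)) / 2"
    by (simp add: Phi_def hv_def inner_vec_def sum_divide_distrib)
  also have "(\<Sum>i\<in>UNIV. G x (e0 i) * H y (e0 i)) = H y (\<Sum>i\<in>UNIV. G x (e0 i) *\<^sub>R e0 i)"
    by (simp add: H_sum2 H_scale2)
  also have "\<dots> = H y x" using onb_expand[OF onb0, of x] by simp
  finally show ?thesis .
qed

lemma g_gs: "g x y = gs (Rm x) (Rm y)"
  by (simp add: g_decomp gs_def Rm_def G_Phi inner_add_left inner_add_right Phi_hv
      inner_commute[of "hv _"] H_sym[of "fst y"])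

lemma epsM_Rm: "x \<in> epsM \<longleftrightarrow> fst (Rm x) = 0"
  by (simp add: epsM_iff fst_Rm Phi_eq0)

end

lemma cross_all_zero: fixes v :: "real^3" assumes "\<And>a. v \<times> a = 0" shows "v = 0"
proof -
  have "v \<times> axis 1 1 = 0" "v \<times> axis 2 1 = 0" using assms by auto
  then show ?thesis by (simp add: cross3_simps axis_def forall_3)
qed

lemma triple_skew: fixes a b w :: "real^3" shows "a \<bullet> (w \<times> b) + (w \<times> a) \<bullet> b = 0"
  by (simp add: cross3_simps)

context spe begin

definition Pw :: "real^3 \<Rightarrow> dmod set" where "Pw w = {x. snd (Rm x) = w \<times> fst (Rm x)}"
definition hw :: "real^3 \<Rightarrow> real^3 \<Rightarrow> dmod" where "hw w a = Ri (a, w \<times> a)"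

lemma mem_Pw: "x \<in> Pw w \<longleftrightarrow> snd (Rm x) = w \<times> fst (Rm x)" by (simp add: Pw_def)

lemma Rm_hw[simp]: "Rm (hw w a) = (a, w \<times> a)" by (simp add: hw_def)

lemma Pw_range: "Pw w = range (hw w)"
proof
  show "Pw w \<subseteq> range (hw w)"
  proof
    fix x assume "x \<in> Pw w"
    then have "Rm x = Rm (hw w (fst (Rm x)))" by (simp add: mem_Pw prod_eq_iff)
    then show "x \<in> range (hw w)" by (metis Rm_inj rangeI)
  qed
qed (auto simp: mem_Pw)

lemma hw_linear: "linear (hw w)"
proof (rule linearI)
  fix a b show "hw w (a + b) = hw w a + hw w b"
    by (subst Rm_inj[symmetric]) (simp add: Rm_add cross_add_right)
next
  fix c a show "hw w (c *\<^sub>R a) = c *\<^sub>R hw w a"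
    by (subst Rm_inj[symmetric]) (simp add: Rm_scaleR cross_mult_right)
qed

lemma hw_inj: "inj (hw w)"
  by (rule injI) (metis Rm_hw fst_conv)

lemma inE_Pw: "inE g (Pw w)"
  unfolding inE_def
proof (intro conjI)
  show "subspace (Pw w)"
    unfolding subspace_def
    by (auto simp: mem_Pw Rm_add Rm_scaleR cross_add_right cross_mult_right)
  have "dim (Pw w) = dim (UNIV :: (real^3) set)"
    unfolding Pw_range
    by (rule eucl.dim_image_eq[OF hw_linear]) (use hw_inj in \<open>auto intro: inj_on_subset\<close>)
  then show "dim (Pw w) = 3" by simp
  show "\<forall>x\<in>Pw w. \<forall>y\<in>Pw w. snd (g x y) = 0"
    by (simp add: mem_Pw g_gs gs_def triple_skew)
  show "Pw w \<inter> epsM = {0}"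
  proof (intro equalityI subsetI)
    fix x assume "x \<in> Pw w \<inter> epsM"
    then have "Rm x = 0" by (simp add: mem_Pw epsM_Rm prod_eq_iff)
    then show "x \<in> {0}" by (metis Rm_0 Rm_inj singletonI)
  next
    fix x :: dmod assume "x \<in> {0}" then show "x \<in> Pw w \<inter> epsM"
      by (simp add: mem_Pw epsM_Rm)
  qed
qed

lemma Pw_inj: "Pw w = Pw w' \<longleftrightarrow> w = w'"
proof
  assume eq: "Pw w = Pw w'"
  have "(w - w') \<times> a = 0" for a
  proof -
    have "hw w a \<in> Pw w'" using eq Pw_range by auto
    then have "w \<times> a = w' \<times> a" by (simp add: mem_Pw)
    then show ?thesis by (simp add: Cross3.left_diff_distrib)
  qed
  then show "w = w'" using cross_all_zero[of "w - w'"] by simp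
qed simp

lemma lift_Pw: "lift (Pw w) v = hw w (Phi v)"
  unfolding lift_def
proof (rule the_equality)
  show "hw w (Phi v) \<in> Pw w \<and> fst (hw w (Phi v)) = v"
    by (simp add: mem_Pw) (simp add: hw_def Ri_def)
next
  fix x assume "x \<in> Pw w \<and> fst x = v"
  then have "Rm x = Rm (hw w (Phi v))" by (simp add: mem_Pw prod_eq_iff fst_Rm)
  then show "x = hw w (Phi v)" by (simp only: Rm_inj)
qed

end

lemma linear_cross_right: "linear (\<lambda>y. (w::real^3) \<times> y)"
  by (rule linearI) (simp_all add: cross_add_right cross_mult_right)

lemma ax_inner: "axis j (1::real) \<bullet> (v::real^3) = v $ j"
  by (simp add: inner_vec_def axis_def sum_3) (metis exhaust_3)

context spe begin

lemma inE_imp_Pw: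
  assumes "inE g P" shows "\<exists>w. P = Pw w"
proof -
  have sub: "subspace P" and dP: "dim P = 3" and orth: "\<And>x y. x \<in> P \<Longrightarrow> y \<in> P \<Longrightarrow> snd (g x y) = 0"
    and eps: "P \<inter> epsM = {0}"
    using assms unfolding inE_def by blast+
  define h where "h x = fst (Rm x)" for x
  have hl: "linear h" unfolding h_def
    by (rule linearI) (simp_all add: Rm_add Rm_scaleR)
  have h0: "x = 0" if "x \<in> P" "h x = 0" for x
  proof -
    have "x \<in> P \<inter> epsM" using that by (simp add: h_def epsM_Rm)
    then show ?thesis unfolding eps by simp
  qed
  have hinj: "inj_on h P"
  proof (rule inj_onI)
    fix x y assume "x \<in> P" "y \<in> P" "h x = h y"
    then have "x - y \<in> P" "h (x - y) = 0"
      by (simp_all add: subspace_diff[OF sub] linear_diff[OF hl])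
    then show "x = y" using h0 by fastforce
  qed
  have spP: "span P = P" using sub by (simp add: span_eq_iff)
  have "dim (h ` P) = dim P"
    by (rule eucl.dim_image_eq[OF hl]) (simp add: spP hinj)
  then have "dim (h ` P) = DIM(real^3)" using dP by simp
  then have "span (h ` P) = UNIV" using eucl.dim_eq_full by blast
  moreover have "span (h ` P) = h ` P"
    using sub hl by (simp add: span_eq_iff linear_subspace_image)
  ultimately have surjh: "h ` P = UNIV" by simp
  have "\<forall>k. \<exists>q. q \<in> P \<and> h q = axis k 1" using surjh by (metis UNIV_I imageE)
  then obtain q where q: "\<And>k. q k \<in> P" "\<And>k. h (q k) = axis k 1" by metis
  define t where "t k = snd (Rm (q k))" for k
  have skew0: "h x \<bullet> snd (Rm y) + snd (Rm x) \<bullet> h y = 0" if "x \<in> P" "y \<in> P" for x y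
    using orth[OF that] by (simp add: g_gs gs_def h_def)
  have skew: "t k $ j = - (t j $ k)" for j k
    using skew0[OF q(1)[of j] q(1)[of k]] by (simp add: q(2) t_def ax_inner inner_commute[of _ "axis _ 1"])
  define w :: "real^3" where "w = vector [t 2 $ 3, t 3 $ 1, t 1 $ 2]"
  have wt: "w \<times> axis k 1 = t k" for k
  proof -
    have d: "t 1 $ 1 = 0" "t 2 $ 2 = 0" "t 3 $ 3 = 0" using skew[of 1 1] skew[of 2 2] skew[of 3 3] by auto
    have o: "t 1 $ 3 = - (t 3 $ 1)" "t 2 $ 1 = - (t 1 $ 2)" "t 3 $ 2 = - (t 2 $ 3)"
      using skew[of 3 1] skew[of 1 2] skew[of 2 3] by auto
    show ?thesis using exhaust_3[of k]
      by (auto simp: w_def cross3_def vec_eq_iff forall_3 axis_def d o)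
  qed
  have PinPw: "x \<in> Pw w" if x: "x \<in> P" for x
  proof -
    define x' where "x' = (\<Sum>k\<in>UNIV. (h x $ k) *\<^sub>R q k)"
    have x'P: "x' \<in> P" unfolding x'_def
      using sub q(1) by (intro subspace_sum) (auto intro: subspace_scale)
    have "h x' = (\<Sum>k\<in>UNIV. (h x $ k) *\<^sub>R axis k 1)"
      by (simp add: x'_def linear_sum[OF hl] linear_scale[OF hl] q(2))
    also have "\<dots> = h x" using basis_expansion[of "h x"] by (simp add: scalar_mult_eq_scaleR)
    finally have "x' = x" using hinj x'P x by (auto dest: inj_onD)
    have "Rm x' = (\<Sum>k\<in>UNIV. (h x $ k) *\<^sub>R Rm (q k))" by (simp add: x'_def Rm_sum Rm_scaleR)
    then have "snd (Rm x) = (\<Sum>k\<in>UNIV. (h x $ k) *\<^sub>R t k)"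
      using \<open>x' = x\<close> by (simp add: snd_sum t_def)
    also have "\<dots> = (\<Sum>k\<in>UNIV. (h x $ k) *\<^sub>R (w \<times> axis k 1))" by (simp add: wt)
    also have "\<dots> = w \<times> (\<Sum>k\<in>UNIV. (h x $ k) *\<^sub>R axis k 1)"
      by (simp add: linear_sum[OF linear_cross_right] cross_mult_right)
    also have "\<dots> = w \<times> h x" using basis_expansion[of "h x"] by (simp add: scalar_mult_eq_scaleR)
    finally show ?thesis by (simp add: mem_Pw h_def)
  qed
  have "Pw w \<subseteq> P"
  proof
    fix x assume x: "x \<in> Pw w"
    obtain y where y: "y \<in> P" "h y = h x" using surjh by (metis UNIV_I imageE)
    have "Rm y = Rm x" using PinPw[OF y(1)] x y(2) by (simp add: mem_Pw h_def prod_eq_iff)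
    then show "x \<in> P" using y(1) Rm_inj by auto
  qed
  then show ?thesis using PinPw by blast
qed

lemma inE_iff: "inE g P \<longleftrightarrow> (\<exists>w. P = Pw w)"
  using inE_imp_Pw inE_Pw by blast

end

lemma cross_axes_zero: fixes v :: "real^3"
  assumes "v \<times> axis 1 1 = 0" "v \<times> axis 2 1 = 0" shows "v = 0"
  using assms by (simp add: cross3_simps axis_def forall_3)

context spe begin

lemma Phi_expand: "Phi v $ k = (\<Sum>l\<in>UNIV. v $ l * G (axis l 1) (e0 k))"
proof -
  have "Phi v $ k = G (\<Sum>l\<in>UNIV. v $ l *\<^sub>R axis l 1) (e0 k)"
    using basis_expansion[of v] by (simp add: Phi_def scalar_mult_eq_scaleR)
  then show ?thesis by (simp add: G_sum1 G_scale1)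
qed

lemma Phi_rows: "(\<chi> i. Phi (e i)) = (\<chi> i. e i) ** (\<chi> l k. G (axis l 1) (e0 k))"
  by (simp add: vec_eq_iff matrix_matrix_mult_def Phi_expand)

lemma pos_onb_f:
  assumes "pos_onb g OR e"
  shows "\<And>i j. Phi (e i) \<bullet> Phi (e j) = (if i = j then 1 else 0)" and "det (\<chi> i. Phi (e i)) = 1"
proof -
  have on: "onb e" and eOR: "(\<lambda>i. (e i, 0)) \<in> OR" using assms pos_onb_iff by blast+
  show orth: "Phi (e i) \<bullet> Phi (e j) = (if i = j then 1 else 0)" for i j
    using on by (simp add: onb_def G_Phi[symmetric])
  obtain b where b: "dbasis b" and OR: "\<And>b'. b' \<in> OR \<longleftrightarrow> dbasis b' \<and> det (Fm b') * det (Fm b) > 0"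
    using orientation_char[OF ORI] by blast
  have e0OR: "(\<lambda>i. (e0 i, 0)) \<in> OR" using E0 pos_onb_iff by blast
  define De where "De = det (\<chi> i. e i)"
  define De0 where "De0 = det (\<chi> i. e0 i)"
  define Pm :: "real^3^3" where "Pm = (\<chi> l k. G (axis l 1) (e0 k))"
  have p1: "De * det (Fm b) > 0" using OR eOR by (simp add: De_def Fm_real)
  have p2: "De0 * det (Fm b) > 0" using OR e0OR by (simp add: De0_def Fm_real)
  have "(\<chi> i. Phi (e0 i)) = (mat 1 :: real^3^3)"
    using onb0 by (simp add: vec_eq_iff Phi_def onb_def mat_def)
  then have dP0: "De0 * det Pm = 1"
    using Phi_rows[of e0] by (metis De0_def Pm_def det_I det_mul)
  have dP: "det (\<chi> i. Phi (e i)) = De * det Pm"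
    using Phi_rows[of e] by (simp add: De_def Pm_def det_mul)
  define F :: "real^3^3" where "F = (\<chi> i. Phi (e i))"
  have FF: "F ** transpose F = mat 1"
    using orth by (simp add: F_def vec_eq_iff matrix_matrix_mult_def transpose_def mat_def inner_vec_def)
  then have "orthogonal_matrix F"
    using matrix_left_right_inverse orthogonal_matrix_def by blast
  then have "det F = 1 \<or> det F = -1" using det_orthogonal_matrix by blast
  moreover have "det F \<noteq> -1"
  proof
    assume "det F = -1"
    then have "De * det Pm = -1" using dP F_def by simp
    then have "De = - De0" using dP0
      by (metis add.inverse_inverse minus_mult_left mult.commute mult.left_commute mult_1_right)
    then show False using p1 p2
      by (metis minus_mult_left neg_0_less_iff_less not_less_iff_gr_or_eq)
  qed
  ultimately show "det (\<chi> i. Phi (e i)) = 1" using F_def by simp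
qed

lemma Rm_eps: "Rm (smul (0, 1) X) = (0, Phi (fst X))"
  by (simp add: Rm_def smul_def Phi_0 linear_0[OF hv_linear])

lemma fst_lift: "fst (lift (Pw w) u) = u"
  by (simp add: lift_Pw hw_def Ri_def)

lemma trans_cond:
  assumes "pos_onb g OR e"
  shows "lift (Pw wB) (e i) = lift (Pw wA) (e i) +
             smul (0, 1) (\<Sum>j\<in>UNIV. \<Sum>k\<in>UNIV. (levi i j k * vin g v (e k)) *\<^sub>R lift (Pw wA) (e j))
    \<longleftrightarrow> wB \<times> Phi (e i) = wA \<times> Phi (e i) + Phi v \<times> Phi (e i)"
proof -
  have rot: "Phi v \<times> Phi (e i) = (\<Sum>j\<in>UNIV. \<Sum>k\<in>UNIV. (levi i j k * (Phi v \<bullet> Phi (e k))) *\<^sub>R Phi (e j))"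
    using rot_levi[of "\<lambda>i. Phi (e i)", OF pos_onb_f(1)[OF assms] pos_onb_f(2)[OF assms]] .
  have "Rm (smul (0, 1) (\<Sum>j\<in>UNIV. \<Sum>k\<in>UNIV. (levi i j k * vin g v (e k)) *\<^sub>R lift (Pw wA) (e j)))
      = (0, \<Sum>j\<in>UNIV. \<Sum>k\<in>UNIV. (levi i j k * (Phi v \<bullet> Phi (e k))) *\<^sub>R Phi (e j))"
  proof -
    let ?S = "\<Sum>j\<in>UNIV. \<Sum>k\<in>UNIV. (levi i j k * vin g v (e k)) *\<^sub>R lift (Pw wA) (e j)"
    have "Rm (smul (0, 1) ?S) = (0, Phi (fst ?S))" by (rule Rm_eps)
    also have "fst ?S = (\<Sum>j\<in>UNIV. \<Sum>k\<in>UNIV. (levi i j k * vin g v (e k)) *\<^sub>R e j)"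
      by (simp only: fst_sum fst_scaleR fst_lift)
    also have "Phi (\<Sum>j\<in>UNIV. \<Sum>k\<in>UNIV. (levi i j k * vin g v (e k)) *\<^sub>R e j)
       = (\<Sum>j\<in>UNIV. \<Sum>k\<in>UNIV. (levi i j k * (Phi v \<bullet> Phi (e k))) *\<^sub>R Phi (e j))"
      by (simp only: linear_sum[OF Phi_linear] Phi_scale vin_G G_Phi)
    finally show ?thesis .
  qed
  then have r1: "Rm (lift (Pw wA) (e i) +
             smul (0, 1) (\<Sum>j\<in>UNIV. \<Sum>k\<in>UNIV. (levi i j k * vin g v (e k)) *\<^sub>R lift (Pw wA) (e j)))
        = (Phi (e i), wA \<times> Phi (e i) + Phi v \<times> Phi (e i))"
    by (simp add: Rm_add lift_Pw rot)
  moreover have r2: "Rm (lift (Pw wB) (e i)) = (Phi (e i), wB \<times> Phi (e i))" by (simp add: lift_Pw)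
  show ?thesis by (subst Rm_inj[symmetric]) (simp only: r1 r2 prod.inject simp_thms)
qed

lemma translates_iff:
  "translates g OR A v B \<longleftrightarrow> (\<exists>w. A = Pw w \<and> B = Pw (w + Phi v))"
proof
  assume tr: "translates g OR A v B"
  then obtain wA wB where A: "A = Pw wA" and B: "B = Pw wB"
    unfolding translates_def inE_iff by blast
  have "wB \<times> Phi (e0 i) = wA \<times> Phi (e0 i) + Phi v \<times> Phi (e0 i)" for i
  proof -
    have "lift (Pw wB) (e0 i) = lift (Pw wA) (e0 i) +
             smul (0, 1) (\<Sum>j\<in>UNIV. \<Sum>k\<in>UNIV. (levi i j k * vin g v (e0 k)) *\<^sub>R lift (Pw wA) (e0 j))"
      using tr E0 unfolding translates_def A B by blast
    then show ?thesis using trans_cond[OF E0] by blast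
  qed
  moreover have "Phi (e0 i) = axis i 1" for i
    using onb0 by (simp add: Phi_def onb_def vec_eq_iff axis_def)
  ultimately have "(wB - (wA + Phi v)) \<times> axis i 1 = 0" for i
    by (metis Cross3.left_diff_distrib cross_add_left diff_self)
  then have "wB = wA + Phi v" using cross_axes_zero by fastforce
  then show "\<exists>w. A = Pw w \<and> B = Pw (w + Phi v)" using A B by blast
next
  assume "\<exists>w. A = Pw w \<and> B = Pw (w + Phi v)"
  then obtain w where A: "A = Pw w" and B: "B = Pw (w + Phi v)" by blast
  show "translates g OR A v B"
    unfolding translates_def A B
  proof (intro conjI inE_Pw allI impI)
    fix e i assume e: "pos_onb g OR e"
    show "lift (Pw (w + Phi v)) (e i) = lift (Pw w) (e i) +
             smul (0, 1) (\<Sum>j\<in>UNIV. \<Sum>k\<in>UNIV. (levi i j k * vin g v (e k)) *\<^sub>R lift (Pw w) (e j))"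
      by (subst trans_cond[OF e]) (rule cross_add_left)
  qed
qed

definition pline :: "real^3 \<Rightarrow> real^3 \<Rightarrow> dmod set set" where
  "pline w0 c = range (\<lambda>t. Pw (w0 + t *\<^sub>R c))"

lemma line_dir_iff: "line_dir g OR L d \<longleftrightarrow> d \<noteq> 0 \<and> (\<exists>w0. L = pline w0 (Phi d))"
proof -
  have "{B. \<exists>t. translates g OR (Pw w0) (t *\<^sub>R d) B} = pline w0 (Phi d)" for w0
    by (auto simp: translates_iff Pw_inj pline_def Phi_scale)
  then show ?thesis unfolding line_dir_def inE_iff by auto
qed

lemma pline_dir:
  assumes "pline w1 c1 = pline w2 c2" "c1 \<noteq> 0" shows "\<exists>s. c2 = s *\<^sub>R c1"
proof -
  have "Pw (w2 + 0 *\<^sub>R c2) \<in> pline w1 c1" "Pw (w2 + 1 *\<^sub>R c2) \<in> pline w1 c1"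
    using assms(1) unfolding pline_def by blast+
  then have "\<exists>t. w2 = w1 + t *\<^sub>R c1" "\<exists>t. w2 + c2 = w1 + t *\<^sub>R c1"
    unfolding pline_def by (auto simp: Pw_inj)
  then obtain t0 t1 where "w2 = w1 + t0 *\<^sub>R c1" "w2 + c2 = w1 + t1 *\<^sub>R c1"
    by blast
  then have "c2 = (t1 - t0) *\<^sub>R c1" by (simp add: algebra_simps)
  then show ?thesis by blast
qed

lemma pline_inter: "pline w1 c1 \<inter> pline w2 c2 \<noteq> {} \<longleftrightarrow> (\<exists>s t. w1 + s *\<^sub>R c1 = w2 + t *\<^sub>R c2)"
proof
  assume "pline w1 c1 \<inter> pline w2 c2 \<noteq> {}"
  then obtain s t where "Pw (w1 + s *\<^sub>R c1) = Pw (w2 + t *\<^sub>R c2)" unfolding pline_def by auto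
  then show "\<exists>s t. w1 + s *\<^sub>R c1 = w2 + t *\<^sub>R c2" by (auto simp: Pw_inj)
next
  assume "\<exists>s t. w1 + s *\<^sub>R c1 = w2 + t *\<^sub>R c2"
  then obtain s t where st: "w1 + s *\<^sub>R c1 = w2 + t *\<^sub>R c2" by blast
  have "Pw (w1 + s *\<^sub>R c1) \<in> pline w1 c1" unfolding pline_def by (rule rangeI)
  moreover have "Pw (w1 + s *\<^sub>R c1) \<in> pline w2 c2" unfolding pline_def st by (rule rangeI)
  ultimately show "pline w1 c1 \<inter> pline w2 c2 \<noteq> {}" by blast
qed

end

lemma par3: fixes a v :: "real^3" assumes "a \<noteq> 0" "v \<times> a = 0"
  shows "v = ((v \<bullet> a) / (a \<bullet> a)) *\<^sub>R a"
proof -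
  have "a \<times> (v \<times> a) = (a \<bullet> a) *\<^sub>R v - (a \<bullet> v) *\<^sub>R a" by (rule Lagrange)
  then have "(a \<bullet> a) *\<^sub>R v = (a \<bullet> v) *\<^sub>R a" using assms(2) by simp
  moreover have "a \<bullet> a \<noteq> 0" using assms(1) by simp
  ultimately have "(1 / (a \<bullet> a)) *\<^sub>R ((a \<bullet> a) *\<^sub>R v) = (1 / (a \<bullet> a)) *\<^sub>R ((a \<bullet> v) *\<^sub>R a)"
    and nz: "a \<bullet> a \<noteq> 0" by simp_all
  then show ?thesis by (simp add: inner_commute)
qed

lemma triple1: fixes w x d :: "real^3" shows "(w \<times> x) \<bullet> d = - (x \<bullet> (w \<times> d))"
  by (simp add: cross3_simps)

lemma cross_nz: fixes d x :: "real^3" assumes "d \<noteq> 0" "x \<noteq> 0" "x \<bullet> d = 0" shows "d \<times> x \<noteq> 0"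
proof
  assume "d \<times> x = 0"
  then have "(norm d * norm x)\<^sup>2 = 0" using norm_cross_dot[of d x] assms(3) by (simp add: inner_commute)
  then show False using assms(1,2) by simp
qed

lemma G1:
  fixes x y' d w0 :: "real^3"
  assumes x: "x \<noteq> 0" and d: "d \<noteq> 0" and xd: "x \<bullet> d = 0" and xy: "x \<bullet> y' = 0"
  shows "(\<exists>t. (w0 + t *\<^sub>R d) \<times> x = y') \<longleftrightarrow> x \<bullet> (w0 \<times> d) + y' \<bullet> d = 0"
proof
  assume "\<exists>t. (w0 + t *\<^sub>R d) \<times> x = y'"
  then obtain t where t: "(w0 + t *\<^sub>R d) \<times> x = y'" by blast
  have "y' \<bullet> d = (w0 \<times> x) \<bullet> d + t * ((d \<times> x) \<bullet> d)"
    by (simp add: t[symmetric] cross_add_left cross_mult_left inner_add_left)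
  also have "(d \<times> x) \<bullet> d = 0" by (simp add: dot_cross_self)
  finally show "x \<bullet> (w0 \<times> d) + y' \<bullet> d = 0" by (simp add: triple1)
next
  assume h: "x \<bullet> (w0 \<times> d) + y' \<bullet> d = 0"
  define v where "v = y' - w0 \<times> x"
  define a where "a = d \<times> x"
  have a0: "a \<noteq> 0" using cross_nz[OF d x xd] by (simp add: a_def)
  have vx: "v \<bullet> x = 0" using xy by (simp add: v_def inner_diff_left inner_diff_right dot_cross_self inner_commute)
  have vd: "v \<bullet> d = 0" using h by (simp add: v_def inner_diff_left triple1)
  have "v \<times> a = 0"
  proof -
    have "v \<times> (d \<times> x) = (v \<bullet> x) *\<^sub>R d - (v \<bullet> d) *\<^sub>R x" by (rule Lagrange)
    then show ?thesis using vx vd by (simp add: a_def)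
  qed
  then have "v = ((v \<bullet> a) / (a \<bullet> a)) *\<^sub>R a" using par3[OF a0] by blast
  then have "(w0 + ((v \<bullet> a) / (a \<bullet> a)) *\<^sub>R d) \<times> x = y'"
    by (simp add: cross_add_left cross_mult_left a_def[symmetric]) (metis v_def add_diff_cancel_left' diff_add_cancel)
  then show "\<exists>t. (w0 + t *\<^sub>R d) \<times> x = y'" by blast
qed

lemma cramer3:
  fixes x1 x2 v :: "real^3"
  shows "((x1 \<times> x2) \<bullet> (x1 \<times> x2)) *\<^sub>R v = ((v \<times> x2) \<bullet> (x1 \<times> x2)) *\<^sub>R x1 + ((x1 \<times> v) \<bullet> (x1 \<times> x2)) *\<^sub>R x2
     + (v \<bullet> (x1 \<times> x2)) *\<^sub>R (x1 \<times> x2)"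
  by (simp add: cross3_simps forall_3)


definition Cc :: "real^3 \<Rightarrow> real^3 \<Rightarrow> dmod \<Rightarrow> bool" where
  "Cc w0 d X \<longleftrightarrow> fst X \<bullet> d = 0 \<and> fst X \<bullet> (w0 \<times> d) + snd X \<bullet> d = 0"

lemma smul_fst: "fst (smul c X) = fst c *\<^sub>R fst X" by (simp add: smul_def)
lemma smul_snd: "snd (smul c X) = fst c *\<^sub>R snd X + snd c *\<^sub>R fst X" by (simp add: smul_def)

lemma Cc_comb: assumes "Cc w0 d X1" "Cc w0 d X2" shows "Cc w0 d (smul a X1 + smul b X2)"
proof -
  have e: "fst (smul a X1 + smul b X2) = fst a *\<^sub>R fst X1 + fst b *\<^sub>R fst X2"
          "snd (smul a X1 + smul b X2) = fst a *\<^sub>R snd X1 + snd a *\<^sub>R fst X1 + fst b *\<^sub>R snd X2 + snd b *\<^sub>R fst X2"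
    by (simp_all add: smul_fst smul_snd)
  have "fst a * (fst X1 \<bullet> (w0 \<times> d) + snd X1 \<bullet> d) + fst b * (fst X2 \<bullet> (w0 \<times> d) + snd X2 \<bullet> d)
        + snd a * (fst X1 \<bullet> d) + snd b * (fst X2 \<bullet> d) = 0"
    using assms by (simp add: Cc_def)
  then show ?thesis using assms unfolding Cc_def e
    by (simp add: inner_add_left algebra_simps)
qed

lemma indep_cross:
  assumes ind: "\<forall>a b. smul a X1 + smul b X2 = 0 \<longrightarrow> a = 0 \<and> b = 0"
  shows "fst X1 \<times> fst X2 \<noteq> 0"
proof
  assume c: "fst X1 \<times> fst X2 = 0"
  have x1: "fst X1 \<noteq> 0"
  proof
    assume "fst X1 = 0"
    then have "smul (0, 1) X1 + smul 0 X2 = 0" by (simp add: smul_def prod_eq_iff zero_prod_def)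
    then have "((0::real), (1::real)) = 0" using ind by blast
    then show False by (simp add: zero_prod_def)
  qed
  have "fst X2 \<times> fst X1 = 0" using c cross_skew[of "fst X2" "fst X1"] by simp
  then have x2: "fst X2 = ((fst X2 \<bullet> fst X1) / (fst X1 \<bullet> fst X1)) *\<^sub>R fst X1" using par3[OF x1] by blast
  define c where "c = (fst X2 \<bullet> fst X1) / (fst X1 \<bullet> fst X1)"
  have "smul (0, - c) X1 + smul (0, 1) X2 = 0"
    using x2 by (simp add: smul_def prod_eq_iff c_def)
  then have "((0::real), (1::real)) = 0" using ind by blast
  then show False by (simp add: zero_prod_def)
qed

lemma tripA: fixes x1 x2 :: "real^3" shows "x1 \<bullet> (x2 \<times> (x1 \<times> x2)) = (x1 \<times> x2) \<bullet> (x1 \<times> x2)"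
  by (simp add: cross3_simps)
lemma tripB: fixes x1 x2 :: "real^3" shows "x2 \<bullet> ((x1 \<times> x2) \<times> x1) = (x1 \<times> x2) \<bullet> (x1 \<times> x2)"
  by (simp add: cross3_simps)
lemma tripC: fixes n m :: "real^3" shows "(n \<times> m) \<times> n = (n \<bullet> n) *\<^sub>R m - (m \<bullet> n) *\<^sub>R n"
  by (simp add: cross3_simps forall_3)

lemma core_fwd:
  assumes ind: "\<forall>a b. smul a X1 + smul b X2 = 0 \<longrightarrow> a = 0 \<and> b = 0"
    and X3: "X3 = smul a X1 + smul b X2"
  shows "\<exists>w0 d. d \<noteq> 0 \<and> Cc w0 d X1 \<and> Cc w0 d X2 \<and> Cc w0 d X3"
proof -
  define x1 x2 y1 y2 where "x1 = fst X1" and "x2 = fst X2" and "y1 = snd X1" and "y2 = snd X2"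
  define n where "n = x1 \<times> x2"
  have n0: "n \<noteq> 0" using indep_cross[OF ind] by (simp add: n_def x1_def x2_def)
  define nn where "nn = n \<bullet> n"
  have nn0: "nn \<noteq> 0" using n0 by (simp add: nn_def)
  define m where "m = - (1 / nn) *\<^sub>R ((y1 \<bullet> n) *\<^sub>R (x2 \<times> n) + (y2 \<bullet> n) *\<^sub>R (n \<times> x1))"
  define w0 where "w0 = (1 / nn) *\<^sub>R (n \<times> m)"
  have mn: "m \<bullet> n = 0" by (simp add: m_def inner_add_left dot_cross_self)
  have wm: "w0 \<times> n = m"
    using nn0 by (simp add: w0_def cross_mult_left tripC mn nn_def[symmetric])
  have tA: "x1 \<bullet> (x2 \<times> n) = nn" by (simp add: n_def nn_def tripA)
  have tB: "x2 \<bullet> (n \<times> x1) = nn" by (simp add: n_def nn_def tripB)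
  have x1m: "x1 \<bullet> m = - (y1 \<bullet> n)"
    using nn0 by (simp add: m_def inner_add_right dot_cross_self tA)
  have x2m: "x2 \<bullet> m = - (y2 \<bullet> n)"
    using nn0 by (simp add: m_def inner_add_right dot_cross_self tB)
  have C1: "Cc w0 n X1" unfolding Cc_def wm
    using x1m by (simp add: x1_def[symmetric] y1_def[symmetric] n_def dot_cross_self)
  have C2: "Cc w0 n X2" unfolding Cc_def wm
    using x2m by (simp add: x2_def[symmetric] y2_def[symmetric] n_def dot_cross_self)
  show ?thesis using n0 C1 C2 Cc_comb[OF C1 C2] X3 by blast
qed

lemma span2:
  fixes x1 x2 d v :: "real^3"
  assumes n0: "x1 \<times> x2 \<noteq> 0" and d0: "d \<noteq> 0" and "x1 \<bullet> d = 0" "x2 \<bullet> d = 0" "v \<bullet> d = 0"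
  shows "\<exists>\<alpha> \<beta>. v = \<alpha> *\<^sub>R x1 + \<beta> *\<^sub>R x2"
proof -
  define n where "n = x1 \<times> x2"
  have "d \<times> n = (d \<bullet> x2) *\<^sub>R x1 - (d \<bullet> x1) *\<^sub>R x2" unfolding n_def by (rule Lagrange)
  then have "n \<times> d = 0" using assms(3,4) cross_skew[of n d] by (simp add: inner_commute)
  then have "n = ((n \<bullet> d) / (d \<bullet> d)) *\<^sub>R d" using par3[OF d0] by blast
  then have vn: "v \<bullet> n = 0" using assms(5) by (metis inner_scaleR_right mult_zero_right)
  have nn: "n \<bullet> n \<noteq> 0" using n0 by (simp add: n_def)
  have "(n \<bullet> n) *\<^sub>R v = ((v \<times> x2) \<bullet> n) *\<^sub>R x1 + ((x1 \<times> v) \<bullet> n) *\<^sub>R x2"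
    using cramer3[of x1 x2 v] vn by (simp add: n_def)
  then have "(1 / (n \<bullet> n)) *\<^sub>R ((n \<bullet> n) *\<^sub>R v) = (1 / (n \<bullet> n)) *\<^sub>R (((v \<times> x2) \<bullet> n) *\<^sub>R x1 + ((x1 \<times> v) \<bullet> n) *\<^sub>R x2)"
    by simp
  then have "v = ((v \<times> x2) \<bullet> n / (n \<bullet> n)) *\<^sub>R x1 + ((x1 \<times> v) \<bullet> n / (n \<bullet> n)) *\<^sub>R x2"
    using nn by (simp add: scaleR_add_right)
  then show ?thesis by blast
qed

lemma core_bwd:
  assumes ind: "\<forall>a b. smul a X1 + smul b X2 = 0 \<longrightarrow> a = 0 \<and> b = 0"
    and d0: "d \<noteq> 0" and C1: "Cc w0 d X1" and C2: "Cc w0 d X2" and C3: "Cc w0 d X3"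
  shows "\<exists>a b. X3 = smul a X1 + smul b X2"
proof -
  have n0: "fst X1 \<times> fst X2 \<noteq> 0" using indep_cross[OF ind] .
  have o: "fst X1 \<bullet> d = 0" "fst X2 \<bullet> d = 0" "fst X3 \<bullet> d = 0" using C1 C2 C3 by (simp_all add: Cc_def)
  obtain a0 b0 where x3: "fst X3 = a0 *\<^sub>R fst X1 + b0 *\<^sub>R fst X2" using span2[OF n0 d0 o] by blast
  define y where "y = snd X3 - a0 *\<^sub>R snd X1 - b0 *\<^sub>R snd X2"
  define m where "m = w0 \<times> d"
  have e: "fst X1 \<bullet> m + snd X1 \<bullet> d = 0" "fst X2 \<bullet> m + snd X2 \<bullet> d = 0" "fst X3 \<bullet> m + snd X3 \<bullet> d = 0"
    using C1 C2 C3 by (simp_all add: Cc_def m_def)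
  have "y \<bullet> d = snd X3 \<bullet> d - a0 * (snd X1 \<bullet> d) - b0 * (snd X2 \<bullet> d)"
    by (simp add: y_def inner_diff_left)
  also have "\<dots> = - (fst X3 \<bullet> m) + a0 * (fst X1 \<bullet> m) + b0 * (fst X2 \<bullet> m)"
  proof -
    have "snd X1 \<bullet> d = - (fst X1 \<bullet> m)" "snd X2 \<bullet> d = - (fst X2 \<bullet> m)" "snd X3 \<bullet> d = - (fst X3 \<bullet> m)"
      using e by linarith+
    then show ?thesis by simp
  qed
  also have "\<dots> = 0" by (simp add: x3 inner_add_left)
  finally have "y \<bullet> d = 0" .
  then obtain a1 b1 where y: "y = a1 *\<^sub>R fst X1 + b1 *\<^sub>R fst X2" using span2[OF n0 d0 o(1,2)] by blast
  have "X3 = smul (a0, a1) X1 + smul (b0, b1) X2"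
    using x3 y by (simp add: prod_eq_iff smul_fst smul_snd y_def algebra_simps)
  then show ?thesis by blast
qed


definition pp :: "dmod \<Rightarrow> real^3" where "pp X = (1 / norm (fst X)) *\<^sub>R fst X"
definition qq :: "dmod \<Rightarrow> real^3" where
  "qq X = (1 / norm (fst X)) *\<^sub>R (snd X - ((fst X \<bullet> snd X) / (fst X \<bullet> fst X)) *\<^sub>R fst X)"

lemma pp_pp: "fst X \<noteq> 0 \<Longrightarrow> pp X \<bullet> pp X = 1"
  by (simp add: pp_def dot_square_norm power2_eq_square)

lemma pp_qq: "fst X \<noteq> 0 \<Longrightarrow> pp X \<bullet> qq X = 0"
  by (simp add: pp_def qq_def inner_diff_right)

lemma pp_nz: "fst X \<noteq> 0 \<Longrightarrow> pp X \<noteq> 0"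
  by (simp add: pp_def)

lemma pp_orth: "fst X \<noteq> 0 \<Longrightarrow> pp X \<bullet> c = 0 \<longleftrightarrow> fst X \<bullet> c = 0"
  by (simp add: pp_def)

lemma line_set:
  fixes p q w :: "real^3" assumes "p \<bullet> p = 1" "p \<bullet> q = 0"
  shows "w \<times> p = q \<longleftrightarrow> (\<exists>s. w = p \<times> q + s *\<^sub>R p)"
proof
  assume h: "w \<times> p = q"
  have p0: "p \<noteq> 0" using assms(1) by auto
  have "(w - p \<times> q) \<times> p = 0"
    using h assms by (simp add: Cross3.left_diff_distrib tripC inner_commute)
  then have "w - p \<times> q = (((w - p \<times> q) \<bullet> p) / (p \<bullet> p)) *\<^sub>R p" using par3[OF p0] by blast
  then have "w = p \<times> q + (((w - p \<times> q) \<bullet> p) / (p \<bullet> p)) *\<^sub>R p" by (metis diff_add_cancel add.commute)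
  then show "\<exists>s. w = p \<times> q + s *\<^sub>R p" by blast
next
  assume "\<exists>s. w = p \<times> q + s *\<^sub>R p"
  then obtain s where "w = p \<times> q + s *\<^sub>R p" by blast
  then show "w \<times> p = q" using assms by (simp add: cross_add_left cross_mult_left tripC inner_commute)
qed

lemma meet_std:
  fixes w0 c :: "real^3"
  assumes x0: "fst X \<noteq> 0" and c0: "c \<noteq> 0" and xc: "fst X \<bullet> c = 0"
  shows "(\<exists>t. (w0 + t *\<^sub>R c) \<times> pp X = qq X) \<longleftrightarrow> Cc w0 c X"
proof -
  define x y where "x = fst X" and "y = snd X"
  define y' where "y' = y - ((x \<bullet> y) / (x \<bullet> x)) *\<^sub>R x"
  have nx: "norm x \<noteq> 0" using x0 by (simp add: x_def)
  have xx: "x \<bullet> x \<noteq> 0" using x0 by (simp add: x_def)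
  have xy': "x \<bullet> y' = 0" using xx by (simp add: y'_def inner_diff_right)
  have y'c: "y' \<bullet> c = y \<bullet> c" using xc by (simp add: y'_def inner_diff_left x_def)
  have eq: "w \<times> pp X = qq X \<longleftrightarrow> w \<times> x = y'" for w
  proof -
    have "w \<times> pp X = (1 / norm x) *\<^sub>R (w \<times> x)" by (simp add: pp_def x_def cross_mult_right)
    moreover have "qq X = (1 / norm x) *\<^sub>R y'" by (simp add: qq_def y'_def x_def y_def)
    ultimately show ?thesis using nx by simp
  qed
  have "(\<exists>t. (w0 + t *\<^sub>R c) \<times> x = y') \<longleftrightarrow> x \<bullet> (w0 \<times> c) + y' \<bullet> c = 0"
    using G1[of x c y' w0] x0 c0 xc xy' by (simp add: x_def)
  then show ?thesis using eq xc y'c by (simp add: Cc_def x_def y_def)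
qed

context spe begin

lemma Rm_smul_pair: "Rm (smul c u) = smul c (Rm u)" by (rule Rm_smul)

lemma unitpart_eq:
  assumes z: "z \<notin> epsM"
  shows "unitpart g z = Ri (pp (Rm z), qq (Rm z))"
  unfolding unitpart_def
proof (rule the_equality)
  define X where "X = Rm z"
  define x y where "x = fst X" and "y = snd X"
  have x0: "x \<noteq> 0" using z by (simp add: epsM_Rm x_def X_def)
  define nx where "nx = norm x"
  have nx0: "nx > 0" using x0 by (simp add: nx_def)
  have xx: "x \<bullet> x = nx * nx" by (simp add: nx_def dot_square_norm power2_eq_square)
  show "g (Ri (pp (Rm z), qq (Rm z))) (Ri (pp (Rm z), qq (Rm z))) = (1, 0) \<and>
        (\<exists>a b. 0 < a \<and> z = smul (a, b) (Ri (pp (Rm z), qq (Rm z))))"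
  proof
    show "g (Ri (pp (Rm z), qq (Rm z))) (Ri (pp (Rm z), qq (Rm z))) = (1, 0)"
      using pp_pp[of X] pp_qq[of X] x0 by (simp add: g_gs gs_def x_def X_def inner_commute)
    have "Rm (smul (nx, (x \<bullet> y) / nx) (Ri (pp X, qq X))) = (nx *\<^sub>R pp X, nx *\<^sub>R qq X + ((x \<bullet> y) / nx) *\<^sub>R pp X)"
      by (simp only: Rm_smul Rm_Ri) (simp add: smul_def)
    also have "\<dots> = (x, y)"
      using nx0 xx by (simp add: pp_def qq_def x_def[symmetric] y_def[symmetric] nx_def[symmetric]
          scaleR_diff_right algebra_simps)
    also have "\<dots> = Rm z" by (simp add: x_def y_def X_def)
    finally have "z = smul (nx, (x \<bullet> y) / nx) (Ri (pp X, qq X))" by (simp add: Rm_inj)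
    then show "\<exists>a b. 0 < a \<and> z = smul (a, b) (Ri (pp (Rm z), qq (Rm z)))"
      using nx0 unfolding X_def by blast
  qed
next
  fix u assume u: "g u u = (1, 0) \<and> (\<exists>a b. 0 < a \<and> z = smul (a, b) u)"
  then obtain a b where a: "a > 0" and zu: "z = smul (a, b) u" by blast
  define p' q' where "p' = fst (Rm u)" and "q' = snd (Rm u)"
  have "gs (Rm u) (Rm u) = (1, 0)" using u by (simp add: g_gs)
  then have pp': "p' \<bullet> p' = 1" and pq': "p' \<bullet> q' = 0"
    by (simp_all add: gs_def p'_def q'_def inner_commute)
  have Rz: "Rm z = (a *\<^sub>R p', a *\<^sub>R q' + b *\<^sub>R p')"
    unfolding zu Rm_smul by (simp add: smul_def p'_def q'_def)
  have np: "norm p' = 1" using pp' by (simp add: norm_eq_sqrt_inner)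
  have "pp (Rm z) = p'" using a np by (simp add: pp_def Rz)
  moreover have "qq (Rm z) = q'"
    using a np pp' pq' by (simp add: qq_def Rz inner_add_right inner_commute algebra_simps)
  ultimately have "Rm u = Rm (Ri (pp (Rm z), qq (Rm z)))" by (simp add: p'_def q'_def)
  then show "u = Ri (pp (Rm z), qq (Rm z))" by (simp only: Rm_inj)
qed

lemma axis_eq:
  assumes z: "z \<notin> epsM"
  shows "axis_of g z = pline (pp (Rm z) \<times> qq (Rm z)) (pp (Rm z))"
proof -
  have x0: "fst (Rm z) \<noteq> 0" using z by (simp add: epsM_Rm)
  have "Ri (pp (Rm z), qq (Rm z)) \<in> Pw w \<longleftrightarrow> (\<exists>s. w = pp (Rm z) \<times> qq (Rm z) + s *\<^sub>R pp (Rm z))" for w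
  proof -
    have "Ri (pp (Rm z), qq (Rm z)) \<in> Pw w \<longleftrightarrow> w \<times> pp (Rm z) = qq (Rm z)" by (auto simp: mem_Pw)
    also have "\<dots> \<longleftrightarrow> (\<exists>s. w = pp (Rm z) \<times> qq (Rm z) + s *\<^sub>R pp (Rm z))"
      by (rule line_set[OF pp_pp[OF x0] pp_qq[OF x0]])
    finally show ?thesis .
  qed
  then show ?thesis
    unfolding axis_of_def unitpart_eq[OF z] pline_def inE_iff by auto
qed

end

context spe begin

lemma Psi_nz: "c \<noteq> 0 \<Longrightarrow> Psi c \<noteq> 0" by (metis Phi_Psi Phi_0)

lemma pline_line_dir: "c \<noteq> 0 \<Longrightarrow> line_dir g OR (pline w0 c) (Psi c)"
  by (simp add: line_dir_iff Psi_nz) blast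

lemma meet_char:
  assumes z: "z \<notin> epsM" and c0: "c \<noteq> 0"
  shows "meet_orth g OR (axis_of g z) (pline w0 c) \<longleftrightarrow> Cc w0 c (Rm z)"
proof -
  define X where "X = Rm z"
  have x0: "fst X \<noteq> 0" using z by (simp add: epsM_Rm X_def)
  define p q where "p = pp X" and "q = qq X"
  have p0: "p \<noteq> 0" using pp_nz[OF x0] by (simp add: p_def)
  have ax: "axis_of g z = pline (p \<times> q) p" using axis_eq[OF z] by (simp add: p_def q_def X_def)
  have ls: "w \<times> p = q \<longleftrightarrow> (\<exists>s. w = p \<times> q + s *\<^sub>R p)" for w
    using line_set[OF pp_pp[OF x0] pp_qq[OF x0]] by (simp add: p_def q_def)
  have lda: "line_dir g OR (axis_of g z) (Psi p)" unfolding ax by (rule pline_line_dir[OF p0])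
  have ldl: "line_dir g OR (pline w0 c) (Psi c)" by (rule pline_line_dir[OF c0])
  have inter: "axis_of g z \<inter> pline w0 c \<noteq> {} \<longleftrightarrow> (\<exists>t. (w0 + t *\<^sub>R c) \<times> p = q)"
    unfolding ax pline_inter ls by (metis)
  show ?thesis
  proof
    assume m: "meet_orth g OR (axis_of g z) (pline w0 c)"
    have "vin g (Psi p) (Psi c) = 0" using m lda ldl unfolding meet_orth_def by blast
    then have "p \<bullet> c = 0" by (simp add: vin_G G_Phi)
    then have xc: "fst X \<bullet> c = 0" using pp_orth[OF x0] by (simp add: p_def)
    have "\<exists>t. (w0 + t *\<^sub>R c) \<times> p = q" using m inter unfolding meet_orth_def by blast
    then show "Cc w0 c (Rm z)" using meet_std[OF x0 c0 xc] by (simp add: p_def q_def X_def)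
  next
    assume C: "Cc w0 c (Rm z)"
    then have xc: "fst X \<bullet> c = 0" by (simp add: Cc_def X_def)
    then have pc: "p \<bullet> c = 0" using pp_orth[OF x0] by (simp add: p_def)
    have "\<exists>t. (w0 + t *\<^sub>R c) \<times> p = q" using meet_std[OF x0 c0 xc] C by (simp add: p_def q_def X_def)
    then have i: "axis_of g z \<inter> pline w0 c \<noteq> {}" using inter by blast
    have dirs: "vin g d1 d2 = 0" if d1: "line_dir g OR (axis_of g z) d1" and d2: "line_dir g OR (pline w0 c) d2" for d1 d2
    proof -
      obtain w1 where "axis_of g z = pline w1 (Phi d1)" using d1 line_dir_iff by blast
      then have "pline (p \<times> q) p = pline w1 (Phi d1)" using ax by simp
      then obtain s1 where s1: "Phi d1 = s1 *\<^sub>R p" using pline_dir[OF _ p0] by blast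
      obtain w2 where "pline w0 c = pline w2 (Phi d2)" using d2 line_dir_iff by blast
      then obtain s2 where s2: "Phi d2 = s2 *\<^sub>R c" using pline_dir[OF _ c0] by blast
      show ?thesis by (simp add: vin_G G_Phi s1 s2 pc)
    qed
    show "meet_orth g OR (axis_of g z) (pline w0 c)"
      unfolding meet_orth_def is_line_def using lda ldl i dirs by blast
  qed
qed

lemma indR:
  assumes "\<forall>a b. smul a z1 + smul b z2 = 0 \<longrightarrow> a = 0 \<and> b = 0"
  shows "\<forall>a b. smul a (Rm z1) + smul b (Rm z2) = 0 \<longrightarrow> a = 0 \<and> b = 0"
proof (intro allI impI)
  fix a b assume "smul a (Rm z1) + smul b (Rm z2) = 0"
  then have "Rm (smul a z1 + smul b z2) = Rm 0" by (simp add: Rm_add Rm_smul)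
  then have "smul a z1 + smul b z2 = 0" by (simp only: Rm_inj)
  then show "a = 0 \<and> b = 0" using assms by blast
qed

theorem main:
  assumes "z1 \<notin> epsM" and "z2 \<notin> epsM" and "z3 \<notin> epsM"
    and ind: "\<forall>a b. smul a z1 + smul b z2 = 0 \<longrightarrow> a = 0 \<and> b = 0"
  shows "(\<exists>a b. z3 = smul a z1 + smul b z2) \<longleftrightarrow>
         (\<exists>L. is_line g OR L \<and>
              meet_orth g OR (axis_of g z1) L \<and>
              meet_orth g OR (axis_of g z2) L \<and>
              meet_orth g OR (axis_of g z3) L)"
proof
  assume "\<exists>a b. z3 = smul a z1 + smul b z2"
  then obtain a b where "z3 = smul a z1 + smul b z2" by blast
  then have "Rm z3 = smul a (Rm z1) + smul b (Rm z2)" by (simp add: Rm_add Rm_smul)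
  then obtain w0 d where d: "d \<noteq> 0" "Cc w0 d (Rm z1)" "Cc w0 d (Rm z2)" "Cc w0 d (Rm z3)"
    using core_fwd[OF indR[OF ind]] by blast
  have "is_line g OR (pline w0 d)" unfolding is_line_def using pline_line_dir[OF d(1)] by blast
  then show "\<exists>L. is_line g OR L \<and>
              meet_orth g OR (axis_of g z1) L \<and>
              meet_orth g OR (axis_of g z2) L \<and>
              meet_orth g OR (axis_of g z3) L"
    using meet_char[OF assms(1) d(1)] meet_char[OF assms(2) d(1)] meet_char[OF assms(3) d(1)] d by blast
next
  assume "\<exists>L. is_line g OR L \<and>
              meet_orth g OR (axis_of g z1) L \<and>
              meet_orth g OR (axis_of g z2) L \<and>
              meet_orth g OR (axis_of g z3) L"
  then obtain L where L: "is_line g OR L" "meet_orth g OR (axis_of g z1) L"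
    "meet_orth g OR (axis_of g z2) L" "meet_orth g OR (axis_of g z3) L" by blast
  then obtain dL where "line_dir g OR L dL" unfolding is_line_def by blast
  then obtain w0 where dL: "dL \<noteq> 0" and Lw: "L = pline w0 (Phi dL)" using line_dir_iff by blast
  have c0: "Phi dL \<noteq> 0" using dL Phi_eq0 by blast
  have C: "Cc w0 (Phi dL) (Rm z1)" "Cc w0 (Phi dL) (Rm z2)" "Cc w0 (Phi dL) (Rm z3)"
    using L meet_char[OF assms(1) c0] meet_char[OF assms(2) c0] meet_char[OF assms(3) c0] Lw by blast+
  obtain a b where "Rm z3 = smul a (Rm z1) + smul b (Rm z2)"
    using core_bwd[OF indR[OF ind] c0 C] by blast
  then have "Rm z3 = Rm (smul a z1 + smul b z2)" by (simp add: Rm_add Rm_smul)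
  then have "z3 = smul a z1 + smul b z2" by (simp only: Rm_inj)
  then show "\<exists>a b. z3 = smul a z1 + smul b z2" by blast
qed

end

theorem proposition10:
  fixes g :: "dmod \<Rightarrow> dmod \<Rightarrow> dual" and OR :: "(3 \<Rightarrow> dmod) set"
    and z1 z2 z3 :: dmod
  assumes "scalar_product g" and "orientation OR"
    and "z1 \<notin> epsM" and "z2 \<notin> epsM" and "z3 \<notin> epsM"
    and "\<forall>a b. smul a z1 + smul b z2 = 0 \<longrightarrow> a = 0 \<and> b = 0"
  shows "(\<exists>a b. z3 = smul a z1 + smul b z2) \<longleftrightarrow>
         (\<exists>L. is_line g OR L \<and>
              meet_orth g OR (axis_of g z1) L \<and>
              meet_orth g OR (axis_of g z2) L \<and>
              meet_orth g OR (axis_of g z3) L)"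
proof -
  interpret spo g OR by unfold_locales (use assms in auto)
  obtain e0 where "pos_onb g OR e0" using pos_onb_exists by blast
  then interpret spe g OR e0 by unfold_locales
  show ?thesis using main assms(3-6) by blast
qed


end
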